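(* Let $F$ be a euclidean field and $B=F[\![X]\!]$. Every quadratic module $Q$ in $B$ is of exactly one of the following forms: (a) $Q=\Phi(F^2,0)$; (b) $Q=B$; (c) $Q=\Phi(F^2,0)\cup\Phi(\epsilon F^2,n)$ for some positive odd integer $n$ and $\epsilon\in\{1,-1\}$; (d) $Q=\Phi(F^2,0)\cup\Phi(F,n)\cup\Phi(F,n+1)$ for some positive integer $n$; (e) $Q=\Phi(F^2,0)\cup\Phi(\epsilon F^2,m)\cup\Phi(F,n)\cup\Phi(F,n+1)$ for some $\epsilon\in\{1,-1\}$, positive odd integer $m$ and positive integer $n$ with $m<n$. In particular, every quadratic module in $F[\![X]\!]$ is a preordering.
   Context: A euclidean field is a formally real field $F$ with $F=F^2\cup(-F^2)$, where $F^2=\{c^2:c\in F\}$; for $\epsilon\in\{\pm1\}$, $\epsilon F^2=\{\epsilon c^2: c\in F\}$. Let $B=F[\![X]\!]$, and for nonzero $f=\sum_{i\ge n}a_iX^i\in B$ with $a_n\ne0$ let $\mathrm{val}(f)=n$ and $\mathrm{an}(f)=a_n$. For a subset $M\subseteq F$ and an integer $n\ge0$, $$\Phi(M,n)=\{x\in B\setminus\{0\}:\ \mathrm{val}(x)\equiv n \pmod 2,\ \mathrm{val}(x)\ge n,\ \mathrm{an}(x)\in M\}\cup\{0\}.$$ A quadratic module in a commutative ring $R$ is a subset $Q$ with $Q+Q\subseteq Q$, $a^2Q\subseteq Q$ for all $a\in R$, and $1\in Q$; a preordering is a quadratic module closed under multiplication. *)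

theory Defs
  imports "HOL-Computational_Algebra.Formal_Power_Series"
begin

definition formally_real_field :: "'a::field itself \<Rightarrow> bool" where
  "formally_real_field _ \<longleftrightarrow>
     \<not> (\<exists>xs :: 'a list. sum_list (map (\<lambda>x. x * x) xs) = -1)"

definition euclidean_field :: "'a::field itself \<Rightarrow> bool" where
  "euclidean_field T \<longleftrightarrow> formally_real_field T \<and>
     (\<forall>x :: 'a. \<exists>c. x = c * c \<or> x = - (c * c))"

definition sq_set :: "'a::field \<Rightarrow> 'a set" where
  "sq_set eps = {eps * (c * c) | c. True}"

text \<open>val(f) = subdegree f, an(f) = coefficient at subdegree f.\<close>
definition Phi :: "'a::field set \<Rightarrow> nat \<Rightarrow> 'a fps set" where
  "Phi M n = {x. x \<noteq> 0 \<and> subdegree x mod 2 = n mod 2 \<and> subdegree x \<ge> n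
                  \<and> fps_nth x (subdegree x) \<in> M} \<union> {0}"

definition quadratic_module :: "'r::comm_ring_1 set \<Rightarrow> bool" where
  "quadratic_module Q \<longleftrightarrow> (\<forall>x\<in>Q. \<forall>y\<in>Q. x + y \<in> Q) \<and>
     (\<forall>a. \<forall>q\<in>Q. a\<^sup>2 * q \<in> Q) \<and> 1 \<in> Q"

definition preordering :: "'r::comm_ring_1 set \<Rightarrow> bool" where
  "preordering Q \<longleftrightarrow> quadratic_module Q \<and> (\<forall>x\<in>Q. \<forall>y\<in>Q. x * y \<in> Q)"

end

theory Submission
  imports Defs
begin

unbundle fps_syntax


lemma power_radical':
  fixes a:: "'a::field fps"
  assumes a0: "a$0 \<noteq> 0" and ch: "of_nat (Suc k) \<noteq> (0::'a)"
  shows "(r (Suc k) (a$0)) ^ Suc k = a$0 \<Longrightarrow> (fps_radical r (Suc k) a) ^ (Suc k) = a"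
proof -
  let ?r = "fps_radical r (Suc k) a"
  assume r0: "(r (Suc k) (a$0)) ^ Suc k = a$0"
  show ?thesis
  proof -
    from a0 r0 have r00: "r (Suc k) (a$0) \<noteq> 0" by auto
    have "?r ^ Suc k $ z = a$z" for z
    proof (induct z rule: nat_less_induct)
      fix n
      assume H: "\<forall>m<n. ?r ^ Suc k $ m = a$m"
      show "?r ^ Suc k $ n = a $n"
      proof (cases n)
        case 0
        then show ?thesis
          using fps_radical_power_nth[of r "Suc k" a, OF r0] by simp
      next
        case (Suc n1)
        then have "n \<noteq> 0" by simp
        let ?Pnk = "natpermute n (k + 1)"
        let ?Pnkn = "{xs \<in> ?Pnk. n \<in> set xs}"
        let ?Pnknn = "{xs \<in> ?Pnk. n \<notin> set xs}"
        have eq: "?Pnkn \<union> ?Pnknn = ?Pnk" by blast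
        have d: "?Pnkn \<inter> ?Pnknn = {}" by blast
        have f: "finite ?Pnkn" "finite ?Pnknn"
          using finite_Un[of ?Pnkn ?Pnknn, unfolded eq]
          by (metis natpermute_finite)+
        let ?f = "\<lambda>v. \<Prod>j\<in>{0..k}. ?r $ v ! j"
        have "sum ?f ?Pnkn = sum (\<lambda>v. ?r $ n * r (Suc k) (a $ 0) ^ k) ?Pnkn"
        proof (rule sum.cong)
          fix v assume v: "v \<in> {xs \<in> natpermute n (k + 1). n \<in> set xs}"
          let ?ths = "(\<Prod>j\<in>{0..k}. fps_radical r (Suc k) a $ v ! j) =
            fps_radical r (Suc k) a $ n * r (Suc k) (a $ 0) ^ k"
          from v obtain i where i: "i \<in> {0..k}" "v = (replicate (k+1) 0) [i:= n]"
            unfolding natpermute_contain_maximal by auto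
          have "(\<Prod>j\<in>{0..k}. fps_radical r (Suc k) a $ v ! j) =
                (\<Prod>j\<in>{0..k}. if j = i then fps_radical r (Suc k) a $ n else r (Suc k) (a$0))"
              using i r0 by (auto simp del: replicate.simps intro: prod.cong)
          also have "\<dots> = (fps_radical r (Suc k) a $ n) * r (Suc k) (a$0) ^ k"
            using i r0 by (simp add: prod_gen_delta)
          finally show ?ths .
        qed rule
        then have "sum ?f ?Pnkn = of_nat (k+1) * ?r $ n * r (Suc k) (a $ 0) ^ k"
          by (simp add: natpermute_max_card[OF \<open>n \<noteq> 0\<close>, simplified])
        also have "\<dots> = a$n - sum ?f ?Pnknn"
          unfolding Suc using r00 a0 ch by (simp add: field_simps fps_radical_def del: of_nat_Suc)
        finally have fn: "sum ?f ?Pnkn = a$n - sum ?f ?Pnknn" .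
        have "(?r ^ Suc k)$n = sum ?f ?Pnkn + sum ?f ?Pnknn"
          unfolding fps_power_nth_Suc sum.union_disjoint[OF f d, unfolded eq] ..
        also have "\<dots> = a$n" unfolding fn by simp
        finally show ?thesis .
      qed
    qed
    then show ?thesis using r0 by (simp add: fps_eq_iff)
  qed
qed

lemma fps_sqrt_exists:
  fixes a :: "'a::field fps"
  assumes "a $ 0 = c * c" "c \<noteq> 0" "(2::'a) \<noteq> 0"
  shows "\<exists>s. a = s * s"
proof -
  have "(fps_radical (\<lambda>_ _. c) (Suc 1) a) ^ (Suc 1) = a"
  proof (rule power_radical')
    show "a $ 0 \<noteq> 0" using assms by (simp del: fps_radical_def)
    have "of_nat (Suc 1) = (2::'a)" by simp
    then show "of_nat (Suc 1) \<noteq> (0::'a)" using assms(3) by simp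
    show "(\<lambda>_ _. c) (Suc 1) (a $ 0) ^ Suc 1 = a $ 0" by (simp only: power_Suc power_one_right assms(1))
  qed
  then have "a = fps_radical (\<lambda>_ _. c) (Suc 1) a * fps_radical (\<lambda>_ _. c) (Suc 1) a"
    by (simp only: power_Suc power_one_right)
  then show ?thesis by blast
qed


lemma euclid_E1: "euclidean_field TYPE('a::field) \<Longrightarrow> \<exists>c. x = c * c \<or> x = - (c * (c::'a))"
  by (simp add: euclidean_field_def)

lemma euclid_E2: "euclidean_field TYPE('a::field) \<Longrightarrow> sum_list (map (\<lambda>x. x * x) xs) \<noteq> (-1::'a)"
  unfolding euclidean_field_def formally_real_field_def by blast

lemma euclid_two: assumes "euclidean_field TYPE('a::field)" shows "(2::'a) \<noteq> 0"
proof
  assume "(2::'a) = 0"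
  then have "(1::'a) = -1" by (metis add_eq_0_iff one_add_one)
  then have "sum_list (map (\<lambda>x. x * x) [1::'a]) = -1" by simp
  with euclid_E2[OF assms] show False by blast
qed

lemma euclid_sq_neg: assumes "euclidean_field TYPE('a::field)" "c * c = - (d * (d::'a))"
  shows "c = 0"
proof (rule ccontr)
  assume c: "c \<noteq> 0"
  have dnz: "d \<noteq> 0" using assms(2) c by auto
  have "(d / c) * (d / c) = -1" using assms(2) c dnz by (simp add: field_simps)
  then have "sum_list (map (\<lambda>x. x * x) [d / c]) = -1" by simp
  with euclid_E2[OF assms(1)] show False by blast
qed

lemma euclid_sq_add: assumes "euclidean_field TYPE('a::field)"
  shows "\<exists>e. c * c + d * d = e * (e::'a)"
proof -
  obtain e where e: "c * c + d * d = e * e \<or> c * c + d * d = - (e * e)"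
    using euclid_E1[OF assms] by blast
  show ?thesis
  proof (cases "c * c + d * d = e * e")
    case True then show ?thesis by blast
  next
    case False
    with e have h: "c * c + d * d + e * e = 0" by simp
    have "e = 0"
    proof (rule ccontr)
      assume ne: "e \<noteq> 0"
      have "(c / e) * (c / e) + (d / e) * (d / e) = -1"
        using h ne by (simp add: field_simps) (metis add.commute add_eq_0_iff add.left_commute)
      then have "sum_list (map (\<lambda>x. x * x) [c / e, d / e]) = -1" by simp
      with euclid_E2[OF assms] show False by blast
    qed
    with h show ?thesis by auto
  qed
qed

lemma sq_set_1: "sq_set 1 = {c * c | c. True}" by (simp add: sq_set_def)
lemma sq_set_m1: "sq_set (-1) = {- (c * c) | c. True}" by (simp add: sq_set_def)

lemma transport:
  fixes Q :: "'a::field fps set"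
  assumes E: "euclidean_field TYPE('a)" and QM: "quadratic_module Q"
    and x: "x \<in> Q" "x \<noteq> 0" and y: "y \<noteq> 0"
    and deg: "subdegree y = subdegree x + 2 * k"
    and lead: "y $ subdegree y = x $ subdegree x * (c * c)" and c: "c \<noteq> 0"
  shows "y \<in> Q"
proof -
  define d where "d = subdegree x"
  define e where "e = subdegree y"
  define u where "u = fps_shift e y"
  define v where "v = fps_shift d x"
  have hy: "y = u * fps_X ^ e" unfolding u_def e_def by (rule subdegree_decompose)
  have hx: "x = v * fps_X ^ d" unfolding v_def d_def by (rule subdegree_decompose)
  have u0: "u $ 0 = y $ e" unfolding u_def by simp
  have v0: "v $ 0 = x $ d" unfolding v_def by simp
  have v0nz: "v $ 0 \<noteq> 0" using v0 x(2) d_def by simp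
  define w where "w = u * inverse v"
  have w0: "w $ 0 = c * c"
    unfolding w_def using u0 v0 v0nz lead d_def e_def by (simp add: field_simps)
  obtain s where s: "w = s * s" using fps_sqrt_exists[OF w0 c euclid_two[OF E]] by blast
  have uw: "u = w * v" unfolding w_def using inverse_mult_eq_1[OF v0nz]
    by (simp add: mult.assoc)
  have "fps_X ^ e = (fps_X ^ k) ^ 2 * (fps_X ^ d :: 'a fps)"
    using deg d_def e_def by (simp add: power_add power_mult[symmetric] mult.commute)
  then have "y = (s * fps_X ^ k) ^ 2 * x"
    using hy hx uw s by (simp add: power2_eq_square algebra_simps)
  moreover have "(s * fps_X ^ k) ^ 2 * x \<in> Q" using QM x(1) by (simp add: quadratic_module_def)
  ultimately show ?thesis by simp
qed

lemma mono_nth: "(fps_const b * fps_X ^ n) $ m = (if m = n then b else (0::'a::field))"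
  by simp

lemma mono_sub: "b \<noteq> 0 \<Longrightarrow> subdegree (fps_const b * fps_X ^ n) = n"
  by (rule subdegreeI) auto

lemma mono_nz: "b \<noteq> 0 \<Longrightarrow> fps_const b * fps_X ^ n \<noteq> (0::'a::field fps)"
  by (metis fps_nonzero_nth mono_nth)

definition Aq :: "'a::field fps set \<Rightarrow> nat \<Rightarrow> 'a \<Rightarrow> bool" where
  "Aq Q d a \<longleftrightarrow> (\<exists>x\<in>Q. x \<noteq> 0 \<and> subdegree x = d \<and> x $ d = a)"

definition Fullq :: "'a::field fps set \<Rightarrow> nat \<Rightarrow> bool" where
  "Fullq Q d \<longleftrightarrow> (\<forall>a. a \<noteq> 0 \<longrightarrow> Aq Q d a)"

context
  fixes Q :: "'a::field fps set"
  assumes E: "euclidean_field TYPE('a)" and QM: "quadratic_module Q"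
begin

lemma zero_in: "0 \<in> Q"
proof -
  have h: "\<forall>a. \<forall>q\<in>Q. a\<^sup>2 * q \<in> Q" "1 \<in> Q" using QM by (simp_all add: quadratic_module_def)
  then have "(0::'a fps)\<^sup>2 * 1 \<in> Q" by blast
  then show ?thesis by simp
qed

lemma one_in: "1 \<in> Q" using QM by (simp add: quadratic_module_def)

lemma add_in: "x \<in> Q \<Longrightarrow> y \<in> Q \<Longrightarrow> x + y \<in> Q" using QM by (simp add: quadratic_module_def)

lemma Aq_nz: "Aq Q d a \<Longrightarrow> a \<noteq> 0"
  unfolding Aq_def by auto

lemma mem_iff: "y \<noteq> 0 \<Longrightarrow> y \<in> Q \<longleftrightarrow> Aq Q (subdegree y) (y $ subdegree y)"
proof
  assume "y \<noteq> 0" "y \<in> Q" then show "Aq Q (subdegree y) (y $ subdegree y)"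
    unfolding Aq_def by blast
next
  assume y: "y \<noteq> 0" and "Aq Q (subdegree y) (y $ subdegree y)"
  then obtain x where x: "x \<in> Q" "x \<noteq> 0" "subdegree x = subdegree y" "x $ subdegree y = y $ subdegree y"
    unfolding Aq_def by blast
  show "y \<in> Q"
    by (rule transport[OF E QM x(1) x(2) y, of 0 1]) (use x in auto)
qed

lemma Aq_scale: assumes "Aq Q d a" "c \<noteq> 0" shows "Aq Q (d + 2 * k) (a * (c * c))"
proof -
  obtain x where x: "x \<in> Q" "x \<noteq> 0" "subdegree x = d" "x $ d = a"
    using assms(1) unfolding Aq_def by blast
  have a: "a \<noteq> 0" using x by auto
  define y where "y = fps_const (a * (c * c)) * fps_X ^ (d + 2 * k)"
  have ac: "a * (c * c) \<noteq> 0" using a assms(2) by simp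
  have ynz: "y \<noteq> 0" unfolding y_def using mono_nz[OF ac] .
  have ys: "subdegree y = d + 2 * k" unfolding y_def using mono_sub[OF ac] .
  have "y \<in> Q"
    by (rule transport[OF E QM x(1) x(2) ynz, of k c]) (use x ys assms(2) in \<open>auto simp: y_def\<close>)
  moreover have "y $ (d + 2 * k) = a * (c * c)" unfolding y_def by (simp only: mono_nth) simp
  ultimately show ?thesis unfolding Aq_def using ynz ys by blast
qed

lemma Aq_scale0: assumes "Aq Q d a" "c \<noteq> 0" shows "Aq Q d (a * (c * c))"
  using Aq_scale[OF assms, of 0] by simp

lemma A01: "Aq Q 0 1"
  unfolding Aq_def using one_in by (intro bexI[of _ 1]) auto

lemma even_A1: "even d \<Longrightarrow> Aq Q d 1"
  using Aq_scale[OF A01, of 1 "d div 2"] by simp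

lemma Full_both: assumes "Aq Q d a" "Aq Q d (-a)" shows "Fullq Q d"
  unfolding Fullq_def
proof (intro allI impI)
  fix b :: 'a assume b: "b \<noteq> 0"
  have a: "a \<noteq> 0" using Aq_nz[OF assms(1)] .
  obtain t where t: "b / a = t * t \<or> b / a = - (t * t)" using euclid_E1[OF E] by blast
  have tnz: "t \<noteq> 0" using t a b by auto
  show "Aq Q d b"
  proof (cases "b / a = t * t")
    case True
    then have "b = a * (t * t)" using a by (simp add: field_simps)
    then show ?thesis using Aq_scale0[OF assms(1) tnz] by simp
  next
    case False
    then have "b / a = - (t * t)" using t by simp
    then have "b = (-a) * (t * t)" using a by (simp add: field_simps)
    then show ?thesis using Aq_scale0[OF assms(2) tnz] by simp
  qed
qed

lemma Full_Suc: assumes "Fullq Q d" shows "Fullq Q (Suc d)"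
  unfolding Fullq_def
proof (intro allI impI)
  fix b :: 'a assume b: "b \<noteq> 0"
  define y1 where "y1 = (fps_X ^ d :: 'a fps)"
  define y2 where "y2 = - (fps_X ^ d) + fps_const b * fps_X ^ (Suc d)"
  have y1s: "subdegree y1 = d" unfolding y1_def by (rule fps_X_power_subdegree)
  have y1nz: "y1 \<noteq> 0" unfolding y1_def by simp
  have y1Q: "y1 \<in> Q" using mem_iff[OF y1nz] y1s assms unfolding Fullq_def by (simp add: y1_def)
  have y2d: "y2 $ d = -1" unfolding y2_def by (simp only: fps_add_nth fps_neg_nth mono_nth fps_X_power_nth) simp
  have y2s: "subdegree y2 = d"
  proof (rule subdegreeI)
    show "y2 $ d \<noteq> 0" using y2d by simp
    fix i assume "i < d"
    then show "y2 $ i = 0" unfolding y2_def by (simp only: fps_add_nth fps_neg_nth mono_nth fps_X_power_nth) simp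
  qed
  have y2nz: "y2 \<noteq> 0" using y2d by auto
  have y2Q: "y2 \<in> Q" using mem_iff[OF y2nz] y2s y2d assms unfolding Fullq_def by simp
  have sum: "y1 + y2 = fps_const b * fps_X ^ (Suc d)" unfolding y1_def y2_def by simp
  have "fps_const b * fps_X ^ (Suc d) \<in> Q" using add_in[OF y1Q y2Q] sum by simp
  then show "Aq Q (Suc d) b" unfolding Aq_def using mono_nz[OF b] mono_sub[OF b] b
    by (intro bexI[of _ "fps_const b * fps_X ^ (Suc d)"]) auto
qed

lemma Full_mono: assumes "Fullq Q d" "d \<le> e" shows "Fullq Q e"
  using assms(2,1) by (induction e rule: dec_induct) (auto intro: Full_Suc)

lemma even_neg_full: assumes "even d" "Aq Q d (-(c*c))" shows "Fullq Q d"
proof -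
  have c: "c \<noteq> 0" using Aq_nz[OF assms(2)] by auto
  have "Aq Q d (1 * (c * c))" using Aq_scale0[OF even_A1[OF assms(1)] c] .
  then show ?thesis using Full_both[of d "c*c"] assms(2) by simp
qed

end


lemma sq_set_iff: "b \<in> sq_set eps \<longleftrightarrow> (\<exists>c. b = eps * (c * c))"
  by (auto simp: sq_set_def)

definition Cnd :: "bool \<Rightarrow> nat \<Rightarrow> bool \<Rightarrow> nat \<Rightarrow> 'a::field \<Rightarrow> nat \<Rightarrow> 'a \<Rightarrow> bool" where
  "Cnd hN n hM m eps d b \<longleftrightarrow> (hN \<and> n \<le> d) \<or> (even d \<and> b \<in> sq_set 1) \<or>
     (hM \<and> odd d \<and> m \<le> d \<and> b \<in> sq_set eps)"

context
  fixes Q :: "'a::field fps set"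
  assumes E: "euclidean_field TYPE('a)" and QM: "quadratic_module Q"
begin

lemma key:
  "\<exists>hN n hM m eps. eps \<in> {1, -1} \<and> odd m \<and> (hN \<and> hM \<longrightarrow> m < n) \<and>
     (\<forall>y. y \<in> Q \<longleftrightarrow> y = 0 \<or> Cnd hN n hM m eps (subdegree y) (y $ subdegree y))"
proof -
  define hN where "hN = (\<exists>d. Fullq Q d)"
  define n where "n = (LEAST d. Fullq Q d)"
  have Nle: "Fullq Q d \<Longrightarrow> hN \<and> n \<le> d" for d unfolding hN_def n_def by (auto intro: Least_le)
  have Nfull: "hN \<Longrightarrow> n \<le> d \<Longrightarrow> Fullq Q d" for d
    unfolding hN_def n_def by (meson LeastI Full_mono[OF E QM])
  define P where "P d = (odd d \<and> (\<exists>a. Aq Q d a) \<and> (\<not> hN \<or> d < n))" for d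
  define hM where "hM = (\<exists>d. P d)"
  obtain m eps where meps: "odd m" "eps \<in> {1, -1::'a}"
    "hM \<Longrightarrow> P m \<and> Aq Q m eps \<and> (\<forall>d. P d \<longrightarrow> m \<le> d)"
  proof (cases hM)
    case False
    then show ?thesis using that[of 1 1] by auto
  next
    case True
    define m where "m = (LEAST d. P d)"
    have Pm: "P m" unfolding m_def using True hM_def by (meson LeastI)
    have mle: "\<forall>d. P d \<longrightarrow> m \<le> d" unfolding m_def by (auto intro: Least_le)
    obtain a where a: "Aq Q m a" using Pm P_def by blast
    have anz: "a \<noteq> 0" using Aq_nz[OF E QM a] .
    obtain t where t: "a = t * t \<or> a = - (t * t)" using euclid_E1[OF E] by blast
    have tnz: "t \<noteq> 0" using t anz by auto
    have itnz: "1 / t \<noteq> 0" using tnz by simp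
    have sc: "Aq Q m (a * ((1/t) * (1/t)))" using Aq_scale0[OF E QM a itnz] .
    show ?thesis
    proof (cases "a = t * t")
      case True
      then have "Aq Q m 1" using sc tnz by (simp add: field_simps)
      then show ?thesis using that[of m 1] Pm mle P_def by auto
    next
      case False
      then have "a = - (t * t)" using t by simp
      then have "Aq Q m (-1)" using sc tnz by (simp add: field_simps)
      then show ?thesis using that[of m "-1"] Pm mle P_def by auto
    qed
  qed
  have char: "Aq Q d b \<longleftrightarrow> Cnd hN n hM m eps d b" if b: "b \<noteq> 0" for d b
  proof
    assume A: "Aq Q d b"
    show "Cnd hN n hM m eps d b"
    proof (cases "hN \<and> n \<le> d")
      case True then show ?thesis by (simp add: Cnd_def)
    next
      case notN: False
      then have nf: "\<not> Fullq Q d" using Nle by blast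
      obtain t where t: "b = t * t \<or> b = - (t * t)" using euclid_E1[OF E] by blast
      have tnz: "t \<noteq> 0" using t b by auto
      show ?thesis
      proof (cases "even d")
        case True
        have "b = t * t"
        proof (rule ccontr)
          assume "b \<noteq> t * t"
          then have "b = - (t * t)" using t by simp
          then show False using even_neg_full[OF E QM True, of t] A nf by simp
        qed
        then show ?thesis using True by (auto simp: Cnd_def sq_set_iff)
      next
        case odd: False
        have Pd: "P d" unfolding P_def using odd A notN by auto
        then have hM unfolding hM_def by blast
        with meps(3) Pd have Pm: "P m" and Am: "Aq Q m eps" and md: "m \<le> d" by auto
        have k: "m + 2 * ((d - m) div 2) = d" using md odd meps(1) by presburger
        have Ad: "Aq Q d (eps * (1 * 1))" using Aq_scale[OF E QM Am, of 1 "(d - m) div 2"] k by simp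
        have "b \<in> sq_set eps"
        proof (rule ccontr)
          assume nin: "b \<notin> sq_set eps"
          have "b = - eps * (t * t)"
            using t meps(2) nin by (auto simp: sq_set_iff)
          then have "Aq Q d (- eps)"
            using Aq_scale0[OF E QM A, of "1/t"] tnz by (simp add: field_simps)
          then have "Fullq Q d" using Full_both[OF E QM, of d eps] Ad by simp
          then show False using nf by simp
        qed
        then show ?thesis using odd md \<open>hM\<close> by (auto simp: Cnd_def)
      qed
    qed
  next
    assume C: "Cnd hN n hM m eps d b"
    show "Aq Q d b"
    proof -
      consider (N) "hN \<and> n \<le> d" | (Ev) "even d" "b \<in> sq_set 1"
        | (Od) "hM" "odd d" "m \<le> d" "b \<in> sq_set eps"
        using C unfolding Cnd_def by blast
      then show ?thesis
      proof cases
        case N then show ?thesis using Nfull b unfolding Fullq_def by blast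
      next
        case Ev
        then obtain c where c: "b = c * c" by (auto simp: sq_set_iff)
        then have "c \<noteq> 0" using b by auto
        then show ?thesis using Aq_scale0[OF E QM even_A1[OF E QM Ev(1)]] c by simp
      next
        case Od
        then obtain c where c: "b = eps * (c * c)" by (auto simp: sq_set_iff)
        then have cnz: "c \<noteq> 0" using b by auto
        have Am: "Aq Q m eps" using meps(3) Od(1) by blast
        have k: "m + 2 * ((d - m) div 2) = d" using Od meps(1) by presburger
        show ?thesis using Aq_scale[OF E QM Am cnz, of "(d - m) div 2"] k c by simp
      qed
    qed
  qed
  have mn: "hN \<and> hM \<longrightarrow> m < n" using meps(3) P_def by auto
  have "\<forall>y. y \<in> Q \<longleftrightarrow> y = 0 \<or> Cnd hN n hM m eps (subdegree y) (y $ subdegree y)"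
  proof
    fix y :: "'a fps"
    show "y \<in> Q \<longleftrightarrow> y = 0 \<or> Cnd hN n hM m eps (subdegree y) (y $ subdegree y)"
    proof (cases "y = 0")
      case True then show ?thesis using zero_in[OF E QM] by simp
    next
      case False
      then show ?thesis using mem_iff[OF E QM False] char[of "y $ subdegree y" "subdegree y"] by simp
    qed
  qed
  then show ?thesis using meps(1,2) mn by blast
qed

end



lemma phi_mem: "y \<noteq> 0 \<Longrightarrow> y \<in> Phi M n \<longleftrightarrow>
   (subdegree y mod 2 = n mod 2 \<and> n \<le> subdegree y \<and> y $ subdegree y \<in> M)"
  by (auto simp: Phi_def)

lemma zero_phi: "0 \<in> Phi M n" by (simp add: Phi_def)

lemma Cnd_mult:
  assumes "eps \<in> {1, -1::'a::field}" "odd m"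
    "Cnd hN n hM m eps d a" "Cnd hN n hM m eps e b"
  shows "Cnd hN n hM m eps (d + e) (a * b)"
proof -
  have ee: "eps * eps = 1" using assms(1) by auto
  show ?thesis using assms(3,4) unfolding Cnd_def sq_set_iff
  proof (elim disjE conjE exE)
    fix c c' assume h: "even d" "a = 1 * (c * c)" "even e" "b = 1 * (c' * c')"
    then show "hN \<and> n \<le> d + e \<or> even (d + e) \<and> (\<exists>c. a * b = 1 * (c * c)) \<or>
      hM \<and> odd (d + e) \<and> m \<le> d + e \<and> (\<exists>c. a * b = eps * (c * c))"
      by (intro disjI2 disjI1 conjI exI[of _ "c * c'"]) (auto simp: algebra_simps)
  next
    fix c c' assume h: "even d" "a = 1 * (c * c)" hM "odd e" "m \<le> e" "b = eps * (c' * c')"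
    then show "hN \<and> n \<le> d + e \<or> even (d + e) \<and> (\<exists>c. a * b = 1 * (c * c)) \<or>
      hM \<and> odd (d + e) \<and> m \<le> d + e \<and> (\<exists>c. a * b = eps * (c * c))"
      by (intro disjI2 conjI exI[of _ "c * c'"]) (auto simp: algebra_simps)
  next
    fix c c' assume h: hM "odd d" "m \<le> d" "a = eps * (c * c)" "even e" "b = 1 * (c' * c')"
    then show "hN \<and> n \<le> d + e \<or> even (d + e) \<and> (\<exists>c. a * b = 1 * (c * c)) \<or>
      hM \<and> odd (d + e) \<and> m \<le> d + e \<and> (\<exists>c. a * b = eps * (c * c))"
      by (intro disjI2 conjI exI[of _ "c * c'"]) (auto simp: algebra_simps)
  next
    fix c c' assume h: hM "odd d" "m \<le> d" "a = eps * (c * c)" hM "odd e" "m \<le> e" "b = eps * (c' * c')"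
    have "a * b = (eps * eps) * ((c * c') * (c * c'))" using h by (simp add: algebra_simps)
    then have "a * b = 1 * ((c * c') * (c * c'))" using ee by simp
    then show "hN \<and> n \<le> d + e \<or> even (d + e) \<and> (\<exists>c. a * b = 1 * (c * c)) \<or>
      hM \<and> odd (d + e) \<and> m \<le> d + e \<and> (\<exists>c. a * b = eps * (c * c))"
      using h by (intro disjI2 disjI1 conjI exI[of _ "c * c'"]) auto
  qed (auto)
qed


lemma ge_split: "(n \<le> (k::nat)) \<longleftrightarrow> (k mod 2 = n mod 2 \<and> n \<le> k) \<or> (k mod 2 = Suc n mod 2 \<and> Suc n \<le> k)"
  by presburger

lemma mono_phi: "b \<noteq> 0 \<Longrightarrow> fps_const b * fps_X ^ k \<in> Phi M n \<longleftrightarrow>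
   (k mod 2 = n mod 2 \<and> n \<le> k \<and> b \<in> M)"
  using phi_mem[OF mono_nz, of b k M n] by (simp add: mono_sub mono_nth del: fps_mult_left_const_nth)

lemma mono_big: "b \<noteq> 0 \<Longrightarrow> n \<le> k \<Longrightarrow> fps_const b * fps_X ^ k \<in> Phi UNIV n \<union> Phi UNIV (n + 1)"
  using mono_phi[of b k UNIV n] mono_phi[of b k UNIV "n+1"] ge_split[of n k] by auto

lemma neg_eps_notin:
  assumes E: "euclidean_field TYPE('a::field)" and eps: "eps \<in> {1, -1::'a}"
  shows "- eps \<notin> sq_set eps"
proof
  assume "- eps \<in> sq_set eps"
  then obtain c where c: "- eps = eps * (c * c)" by (auto simp: sq_set_iff)
  have "c * c = - (1 * 1)" using c eps by (auto simp: minus_equation_iff[of "c*c"])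
  then have "c = 0" using euclid_sq_neg[OF E] by blast
  then show False using c eps by auto
qed

lemma odd_notin_0: "y \<noteq> 0 \<Longrightarrow> odd (subdegree y) \<Longrightarrow> y \<notin> Phi M 0"
  using phi_mem[of y M 0] by presburger

lemma neg1_notin_pos: "0 < m \<Longrightarrow> -1 \<notin> Phi M m"
  by (auto simp: Phi_def)

lemma neg1_notin_0:
  assumes E: "euclidean_field TYPE('a::field)" shows "(-1 :: 'a fps) \<notin> Phi (sq_set 1) 0"
proof -
  have "(-1::'a) \<notin> sq_set 1" using neg_eps_notin[OF E, of 1] by simp
  then show ?thesis by (auto simp: Phi_def)
qed


theorem mainTheorem16:
  fixes Q :: "'a::field fps set"
  assumes "euclidean_field TYPE('a)"
    and "quadratic_module Q"
  shows "length (filter id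
           [ Q = Phi (sq_set 1) 0,
             Q = UNIV,
             (\<exists>n eps. odd n \<and> eps \<in> {1, -1} \<and>
                Q = Phi (sq_set 1) 0 \<union> Phi (sq_set eps) n),
             (\<exists>n. n > 0 \<and>
                Q = Phi (sq_set 1) 0 \<union> Phi UNIV n \<union> Phi UNIV (n + 1)),
             (\<exists>eps m n. eps \<in> {1, -1} \<and> odd m \<and> n > 0 \<and> m < n \<and>
                Q = Phi (sq_set 1) 0 \<union> Phi (sq_set eps) m \<union> Phi UNIV n \<union> Phi UNIV (n + 1))
           ]) = 1
         \<and> preordering Q"
proof -
  note E = assms(1) and QM = assms(2)
  obtain hN n hM m eps where H: "eps \<in> {1, -1}" "odd m" "hN \<and> hM \<longrightarrow> m < n"
    and Qc: "\<And>y. y \<in> Q \<longleftrightarrow> y = 0 \<or> Cnd hN n hM m eps (subdegree y) (y $ subdegree y)"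
    using key[OF E QM] by blast
  have pre: "preordering Q"
    unfolding preordering_def
  proof (intro conjI ballI QM)
    fix x y assume x: "x \<in> Q" and y: "y \<in> Q"
    show "x * y \<in> Q"
    proof (cases "x = 0 \<or> y = 0")
      case True then show ?thesis using zero_in[OF E QM] by auto
    next
      case False
      then have "Cnd hN n hM m eps (subdegree x) (x $ subdegree x)"
        "Cnd hN n hM m eps (subdegree y) (y $ subdegree y)" using x y Qc by auto
      from Cnd_mult[OF H(1,2) this] False show ?thesis using Qc[of "x * y"] by simp
    qed
  qed
  define S where "S = sq_set (1::'a)"
  define FA where "FA = Phi S 0"
  define FC where "FC = (\<lambda>e k. Phi S 0 \<union> Phi (sq_set e) k)"
  define FD where "FD = (\<lambda>k. Phi S 0 \<union> Phi UNIV k \<union> Phi UNIV (k + 1))"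
  define FE where "FE = (\<lambda>e k l. Phi S 0 \<union> Phi (sq_set e) k \<union> Phi UNIV l \<union> Phi UNIV (l + 1))"
  have nB_A: "(-1::'a fps) \<notin> FA" unfolding FA_def S_def using neg1_notin_0[OF E] .
  have nB_C: "(-1::'a fps) \<notin> FC e k" if "odd k" for e k
    unfolding FC_def S_def using neg1_notin_0[OF E] neg1_notin_pos[of k] that by (auto simp: odd_pos)
  have nB_D: "(-1::'a fps) \<notin> FD k" if "k > 0" for k
    unfolding FD_def S_def using neg1_notin_0[OF E] neg1_notin_pos[of k] neg1_notin_pos[of "k+1"] that by auto
  have nB_E: "(-1::'a fps) \<notin> FE e k l" if "odd k" "l > 0" for e k l
    unfolding FE_def S_def using neg1_notin_0[OF E] neg1_notin_pos[of k] neg1_notin_pos[of l]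
      neg1_notin_pos[of "l+1"] that by (auto simp: odd_pos)
  have oddA: "fps_const b * fps_X ^ k \<notin> FA" if "b \<noteq> 0" "odd k" for b :: 'a and k
    unfolding FA_def using odd_notin_0[OF mono_nz[OF that(1)]] mono_sub[OF that(1)] that(2) by auto
  have inC: "fps_const e * fps_X ^ k \<in> FC e k" if "e \<in> {1, -1::'a}" for e k
  proof -
    have "e \<noteq> 0" "e \<in> sq_set e" using that by (auto simp: sq_set_iff intro: exI[of _ 1])
    then show ?thesis unfolding FC_def using mono_phi[of e k "sq_set e" k] by auto
  qed
  have inD: "fps_const b * fps_X ^ (2 * k + 1) \<in> FD k" if "b \<noteq> 0" for b :: 'a and k
    unfolding FD_def using mono_big[OF that, of k "2*k+1"] by auto
  have inE: "fps_const b * fps_X ^ (2 * l + 1) \<in> FE e k l" if "b \<noteq> 0" for b :: 'a and e k l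
    unfolding FE_def using mono_big[OF that, of l "2*l+1"] by auto
  have notC: "fps_const (- e) * fps_X ^ j \<notin> FC e k" if "e \<in> {1, -1::'a}" "odd j" for e j k
  proof -
    have enz: "- e \<noteq> 0" using that by auto
    show ?thesis unfolding FC_def
      using oddA[OF enz that(2)] mono_phi[OF enz, of j "sq_set e" k] neg_eps_notin[OF E that(1)]
      unfolding FA_def by auto
  qed
  have AC: "FA \<noteq> FC e k" if "e \<in> {1, -1}" "odd k" for e k
  proof -
    have "e \<noteq> 0" using that by auto
    then show ?thesis using inC[OF that(1), of k] oddA[of e k] that by auto
  qed
  have AD: "FA \<noteq> FD k" for k using inD[of 1 k] oddA[of 1 "2*k+1"] by auto
  have AE: "FA \<noteq> FE e k l" for e k l using inE[of 1 l e k] oddA[of 1 "2*l+1"] by auto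
  have CD: "FC e k \<noteq> FD l" if "e \<in> {1, -1}" for e k l
  proof -
    have "- e \<noteq> 0" using that by auto
    then show ?thesis using inD[of "-e" l] notC[OF that, of "2*l+1" k] by auto
  qed
  have CE: "FC e k \<noteq> FE e' k' l" if "e \<in> {1, -1}" for e e' k k' l
  proof -
    have "- e \<noteq> 0" using that by auto
    then show ?thesis using inE[of "-e" l e' k'] notC[OF that, of "2*l+1" k] by auto
  qed
  have DE: "FD j \<noteq> FE e k l" if "e \<in> {1, -1}" "odd k" "k < l" for j e k l
  proof
    assume eq: "FD j = FE e k l"
    have enz: "e \<noteq> 0" "- e \<noteq> 0" using that by auto
    have "fps_const e * fps_X ^ k \<in> FE e k l" using inC[OF that(1), of k] unfolding FC_def FE_def by auto
    then have "fps_const e * fps_X ^ k \<in> FD j" using eq by simp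
    then have jk: "j \<le> k" unfolding FD_def using oddA[OF enz(1) that(2)] mono_phi[OF enz(1), of k UNIV j]
      mono_phi[OF enz(1), of k UNIV "j+1"] unfolding FA_def by auto
    have "fps_const (-e) * fps_X ^ k \<in> FD j" unfolding FD_def using mono_big[OF enz(2) jk] by auto
    then have m: "fps_const (-e) * fps_X ^ k \<in> FE e k l" using eq by simp
    show False using m notC[OF that(1,2), of k] unfolding FE_def FC_def
      using mono_phi[OF enz(2), of k UNIV l] mono_phi[OF enz(2), of k UNIV "l+1"] that(3) by auto
  qed
  have L: "[ Q = Phi (sq_set 1) 0,
             Q = UNIV,
             (\<exists>n eps. odd n \<and> eps \<in> {1, -1} \<and>
                Q = Phi (sq_set 1) 0 \<union> Phi (sq_set eps) n),
             (\<exists>n. n > 0 \<and>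
                Q = Phi (sq_set 1) 0 \<union> Phi UNIV n \<union> Phi UNIV (n + 1)),
             (\<exists>eps m n. eps \<in> {1, -1} \<and> odd m \<and> n > 0 \<and> m < n \<and>
                Q = Phi (sq_set 1) 0 \<union> Phi (sq_set eps) m \<union> Phi UNIV n \<union> Phi UNIV (n + 1))
           ] = [Q = FA, Q = UNIV, (\<exists>k e. odd k \<and> e \<in> {1, -1} \<and> Q = FC e k),
                (\<exists>k. k > 0 \<and> Q = FD k),
                (\<exists>e k l. e \<in> {1, -1} \<and> odd k \<and> l > 0 \<and> k < l \<and> Q = FE e k l)]"
    by (simp add: FA_def FC_def FD_def FE_def S_def)
  have cnt: "length (filter id [Q = FA, Q = UNIV, (\<exists>k e. odd k \<and> e \<in> {1, -1} \<and> Q = FC e k),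
                (\<exists>k. k > 0 \<and> Q = FD k),
                (\<exists>e k l. e \<in> {1, -1} \<and> odd k \<and> l > 0 \<and> k < l \<and> Q = FE e k l)]) = 1"
  proof -
    have Qe: "y \<in> Q \<longleftrightarrow> y \<in> R" if "0 \<in> R"
      "\<And>y. y \<noteq> 0 \<Longrightarrow> Cnd hN n hM m eps (subdegree y) (y $ subdegree y) \<longleftrightarrow> y \<in> R" for y R
      using Qc[of y] that by (cases "y = 0") auto
    consider (B) "hN" "n = 0" | (A) "\<not> hN" "\<not> hM" | (C) "\<not> hN" "hM"
      | (D) "hN" "n > 0" "\<not> hM" | (EE) "hN" "n > 0" "hM" by blast
    then show ?thesis
    proof cases
      case B
      have "Q = UNIV" using Qc B by (auto simp: Cnd_def)
      then have "(-1::'a fps) \<in> Q" by simp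
      then have "Q \<noteq> FA" "\<not> (\<exists>k e. odd k \<and> e \<in> {1, -1} \<and> Q = FC e k)"
        "\<not> (\<exists>k. k > 0 \<and> Q = FD k)"
        "\<not> (\<exists>e k l. e \<in> {1, -1} \<and> odd k \<and> l > 0 \<and> k < l \<and> Q = FE e k l)"
        using nB_A nB_C nB_D nB_E by blast+
      then show ?thesis using \<open>Q = UNIV\<close> by simp
    next
      case A
      have "Q = FA"
      proof (rule set_eqI, rule Qe)
        show "0 \<in> FA" by (simp add: FA_def zero_phi)
        fix y :: "'a fps" assume y: "y \<noteq> 0"
        show "Cnd hN n hM m eps (subdegree y) (y $ subdegree y) \<longleftrightarrow> y \<in> FA"
          unfolding FA_def Cnd_def phi_mem[OF y] S_def using A by (auto simp: even_iff_mod_2_eq_zero)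
      qed
      moreover have "FA \<noteq> UNIV" using nB_A by auto
      ultimately show ?thesis using AC AD AE by auto
    next
      case C
      have "Q = FC eps m"
      proof (rule set_eqI, rule Qe)
        show "0 \<in> FC eps m" by (simp add: FC_def zero_phi)
        fix y :: "'a fps" assume y: "y \<noteq> 0"
        show "Cnd hN n hM m eps (subdegree y) (y $ subdegree y) \<longleftrightarrow> y \<in> FC eps m"
          unfolding FC_def Cnd_def Un_iff phi_mem[OF y] S_def using C H(2) by (auto simp: even_iff_mod_2_eq_zero odd_iff_mod_2_eq_one)
      qed
      moreover have "Q \<noteq> FA" "Q \<noteq> UNIV" "\<exists>k e. odd k \<and> e \<in> {1, -1} \<and> Q = FC e k"
        "\<not> (\<exists>k. k > 0 \<and> Q = FD k)"
        "\<not> (\<exists>e k l. e \<in> {1, -1} \<and> odd k \<and> l > 0 \<and> k < l \<and> Q = FE e k l)"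
        using \<open>Q = FC eps m\<close> AC[OF H(1,2)] nB_C[OF H(2)] H(1,2) CD[OF H(1)] CE[OF H(1)] by blast+
      ultimately show ?thesis by (simp only: filter.simps id_apply if_True if_False) simp
    next
      case D
      have "Q = FD n"
      proof (rule set_eqI, rule Qe)
        show "0 \<in> FD n" by (simp add: FD_def zero_phi)
        fix y :: "'a fps" assume y: "y \<noteq> 0"
        show "Cnd hN n hM m eps (subdegree y) (y $ subdegree y) \<longleftrightarrow> y \<in> FD n"
          unfolding FD_def Cnd_def Un_iff phi_mem[OF y] S_def using D ge_split[of n "subdegree y"] by (auto simp: even_iff_mod_2_eq_zero odd_iff_mod_2_eq_one)
      qed
      moreover have "Q \<noteq> FA" "Q \<noteq> UNIV" "\<not> (\<exists>k e. odd k \<and> e \<in> {1, -1} \<and> Q = FC e k)"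
        "\<exists>k. k > 0 \<and> Q = FD k"
        "\<not> (\<exists>e k l. e \<in> {1, -1} \<and> odd k \<and> l > 0 \<and> k < l \<and> Q = FE e k l)"
        using \<open>Q = FD n\<close> AD[of n] nB_D[OF D(2)] D(2) CD DE by blast+
      ultimately show ?thesis by (simp only: filter.simps id_apply if_True if_False) simp
    next
      case EE
      have mn: "m < n" using H(3) EE by simp
      have "Q = FE eps m n"
      proof (rule set_eqI, rule Qe)
        show "0 \<in> FE eps m n" by (simp add: FE_def zero_phi)
        fix y :: "'a fps" assume y: "y \<noteq> 0"
        show "Cnd hN n hM m eps (subdegree y) (y $ subdegree y) \<longleftrightarrow> y \<in> FE eps m n"
          unfolding FE_def Cnd_def Un_iff phi_mem[OF y] S_def using EE H(2) ge_split[of n "subdegree y"] mn by (auto simp: even_iff_mod_2_eq_zero odd_iff_mod_2_eq_one)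
      qed
      moreover have "Q \<noteq> FA" "Q \<noteq> UNIV" "\<not> (\<exists>k e. odd k \<and> e \<in> {1, -1} \<and> Q = FC e k)"
        "\<not> (\<exists>k. k > 0 \<and> Q = FD k)"
        "\<exists>e k l. e \<in> {1, -1} \<and> odd k \<and> l > 0 \<and> k < l \<and> Q = FE e k l"
        using \<open>Q = FE eps m n\<close> AE[of eps m n] nB_E[OF H(2) EE(2)] H(1,2) EE(2) mn CE
          DE[OF H(1,2) mn] by blast+
      ultimately show ?thesis by (simp only: filter.simps id_apply if_True if_False) simp
    qed
  qed
  show ?thesis using cnt pre unfolding L by simp
qed


end
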